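(* Let $t,k,q,r\in\mathbb{N}$. Let $\mathbf{I}_1$ be a $t$-boundaried CSP instance with $t$-boundaried incidence graph $(G,Z)$ such that $G$ admits no $(8^q,k+1)$-separation, and let $(H,J)$ be the $t$-boundaried incidence graph of a $t$-boundaried CSP instance $\mathbf{I}_2$ with $|V(H)|\le r$. Then the incidence graph $G\oplus H$ of $\mathbf{I}_1\oplus\mathbf{I}_2$ has no $(8^q+r,k+1)$-separation.
   Context: The incidence graph of a CSP instance is the bipartite graph on variables and constraints with $x\sim C$ iff $x$ in the scope of $C$. A $t$-boundaried incidence graph $(G,Z)$ is an incidence graph $G$ with a set $Z$ of at most $t$ variable vertices carrying distinct labels in $\{1,\dots,t\}$; a $t$-boundaried CSP instance is the corresponding instance. Gluing $(G,Z)\oplus(H,J)$ takes the disjoint union and identifies boundary vertices with equal labels. A $(q,k)$-separation of an incidence graph $G$ is a partition $(A,S,B)$ of $V(G)$ with $S$ consisting of variable vertices, $N(A),N(B)\subseteq S$, $|S|\le k$, $|A|,|B|\ge q$. *)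

theory Defs
  imports Main
begin

text \<open>Incidence graph of a CSP instance: a bipartite graph with a set of variable vertices,
 a set of constraint vertices, and incidences (x, C) meaning variable x is in the scope of C.\<close>

record 'v igraph =
  vars :: "'v set"
  cons :: "'v set"
  inc  :: "('v \<times> 'v) set"

definition igraph :: "'v igraph \<Rightarrow> bool" where
  "igraph G \<longleftrightarrow> finite (vars G) \<and> finite (cons G) \<and> vars G \<inter> cons G = {}
      \<and> inc G \<subseteq> vars G \<times> cons G"

definition verts :: "'v igraph \<Rightarrow> 'v set" where
  "verts G = vars G \<union> cons G"

definition adj :: "'v igraph \<Rightarrow> 'v \<Rightarrow> 'v \<Rightarrow> bool" where
  "adj G u v \<longleftrightarrow> (u, v) \<in> inc G \<or> (v, u) \<in> inc G"

definition nbhd :: "'v igraph \<Rightarrow> 'v set \<Rightarrow> 'v set" where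
  "nbhd G A = {v \<in> verts G - A. \<exists>u\<in>A. adj G u v}"

text \<open>A t-boundaried incidence graph (G, Z): the boundary Z is given by a partial labelling
 map from labels in {1..t} to distinct variable vertices.\<close>
definition bdd_igraph :: "nat \<Rightarrow> 'v igraph \<Rightarrow> (nat \<Rightarrow> 'v option) \<Rightarrow> bool" where
  "bdd_igraph t G Z \<longleftrightarrow> igraph G \<and> dom Z \<subseteq> {1..t} \<and> inj_on Z (dom Z) \<and> ran Z \<subseteq> vars G"

text \<open>Gluing: disjoint union (vertex type 'v + 'w) in which every boundary vertex of H whose
 label is also used in G is identified with the boundary vertex of G carrying that label.\<close>
definition glue_vtx :: "(nat \<Rightarrow> 'v option) \<Rightarrow> (nat \<Rightarrow> 'w option) \<Rightarrow> 'w \<Rightarrow> 'v + 'w" where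
  "glue_vtx Z J w =
     (if \<exists>i. J i = Some w \<and> i \<in> dom Z
      then Inl (the (Z (SOME i. J i = Some w \<and> i \<in> dom Z)))
      else Inr w)"

definition glue :: "'v igraph \<Rightarrow> (nat \<Rightarrow> 'v option) \<Rightarrow> 'w igraph \<Rightarrow> (nat \<Rightarrow> 'w option)
                     \<Rightarrow> ('v + 'w) igraph" where
  "glue G Z H J =
     \<lparr> vars = Inl ` vars G \<union> glue_vtx Z J ` vars H,
       cons = Inl ` cons G \<union> Inr ` cons H,
       inc  = map_prod Inl Inl ` inc G \<union> (\<lambda>(x, c). (glue_vtx Z J x, Inr c)) ` inc H \<rparr>"

definition is_separation :: "'v igraph \<Rightarrow> nat \<Rightarrow> nat \<Rightarrow> 'v set \<Rightarrow> 'v set \<Rightarrow> 'v set \<Rightarrow> bool" where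
  "is_separation G q k A S B \<longleftrightarrow>
     A \<inter> S = {} \<and> A \<inter> B = {} \<and> S \<inter> B = {} \<and> A \<union> S \<union> B = verts G \<and>
     S \<subseteq> vars G \<and> nbhd G A \<subseteq> S \<and> nbhd G B \<subseteq> S \<and>
     card S \<le> k \<and> card A \<ge> q \<and> card B \<ge> q"

definition has_separation :: "'v igraph \<Rightarrow> nat \<Rightarrow> nat \<Rightarrow> bool" where
  "has_separation G q k \<longleftrightarrow> (\<exists>A S B. is_separation G q k A S B)"

end

theory Submission
  imports Defs
begin

lemma glue_vtx_in:
  assumes "bdd_igraph t G Z"
  shows "glue_vtx Z J w \<in> Inl ` vars G \<union> {Inr w}"
proof (cases "\<exists>i. J i = Some w \<and> i \<in> dom Z")
  case True
  define i where "i = (SOME i. J i = Some w \<and> i \<in> dom Z)"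
  have "J i = Some w \<and> i \<in> dom Z" unfolding i_def using True by (rule someI_ex)
  then obtain v where v: "Z i = Some v" by auto
  then have "v \<in> ran Z" by (auto simp: ran_def)
  then have "v \<in> vars G" using assms by (auto simp: bdd_igraph_def)
  then show ?thesis using True v by (simp add: glue_vtx_def i_def[symmetric])
next
  case False
  then have "glue_vtx Z J w = Inr w" unfolding glue_vtx_def by (rule if_not_P)
  then show ?thesis by simp
qed

lemma verts_glue:
  assumes "bdd_igraph t G Z"
  shows "verts (glue G Z H J) \<subseteq> Inl ` verts G \<union> Inr ` verts H"
  using glue_vtx_in[OF assms]
  by (auto simp: verts_def glue_def) (fastforce+)

lemma Inl_verts_glue:
  assumes "bdd_igraph t G Z" "Inl x \<in> verts (glue G Z H J)"
  shows "x \<in> verts G"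
  using verts_glue[OF assms(1)] assms(2) by auto

lemma Inl_vars_glue:
  assumes "bdd_igraph t G Z" "Inl x \<in> vars (glue G Z H J)"
  shows "x \<in> vars G"
proof -
  have "vars (glue G Z H J) \<subseteq> Inl ` vars G \<union> Inr ` vars H"
    using glue_vtx_in[OF assms(1)] by (auto simp: glue_def) (fastforce+)
  then show ?thesis using assms(2) by auto
qed

theorem lemma12:
  fixes t k q r :: nat
    and G :: "'v igraph" and Z :: "nat \<Rightarrow> 'v option"
    and H :: "'w igraph" and J :: "nat \<Rightarrow> 'w option"
  assumes "bdd_igraph t G Z"
    and "bdd_igraph t H J"
    and "\<not> has_separation G (8 ^ q) (k + 1)"
    and "card (verts H) \<le> r"
  shows "\<not> has_separation (glue G Z H J) (8 ^ q + r) (k + 1)"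
proof
  assume "has_separation (glue G Z H J) (8 ^ q + r) (k + 1)"
  then obtain A S B where sep: "is_separation (glue G Z H J) (8 ^ q + r) (k + 1) A S B"
    by (auto simp: has_separation_def)
  let ?GH = "glue G Z H J"
  define A' where "A' = {x. Inl x \<in> A}"
  define S' where "S' = {x. Inl x \<in> S}"
  define B' where "B' = {x. Inl x \<in> B}"
  have fG: "finite (verts G)" using assms(1) by (auto simp: bdd_igraph_def igraph_def verts_def)
  have fH: "finite (verts H)" using assms(2) by (auto simp: bdd_igraph_def igraph_def verts_def)
  have fGH: "finite (verts ?GH)"
    using verts_glue[OF assms(1)] fG fH by (meson finite_Un finite_imageI finite_subset)
  have cov: "A \<union> S \<union> B = verts ?GH" using sep by (simp add: is_separation_def)
  have incl: "Inl x \<in> verts ?GH" if "x \<in> verts G" for x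
    using that by (auto simp: verts_def glue_def)
  have adjI: "adj ?GH (Inl u) (Inl v)" if "adj G u v" for u v
    using that by (auto simp: adj_def glue_def)
  have part: "A' \<union> S' \<union> B' = verts G"
  proof
    show "A' \<union> S' \<union> B' \<subseteq> verts G"
      using cov Inl_verts_glue[OF assms(1)] by (auto simp: A'_def S'_def B'_def)
    show "verts G \<subseteq> A' \<union> S' \<union> B'"
      using cov incl by (auto simp: A'_def S'_def B'_def)
  qed
  have Svars: "S' \<subseteq> vars G"
  proof
    fix x assume "x \<in> S'"
    then have "Inl x \<in> vars ?GH" using sep by (auto simp: is_separation_def S'_def)
    then show "x \<in> vars G" by (rule Inl_vars_glue[OF assms(1)])
  qed
  have nb: "nbhd G X' \<subseteq> S'" if "nbhd ?GH X \<subseteq> S" "X' = {x. Inl x \<in> X}" for X X'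
  proof
    fix v assume "v \<in> nbhd G X'"
    then obtain u where "v \<in> verts G" "v \<notin> X'" "u \<in> X'" "adj G u v"
      by (auto simp: nbhd_def)
    then have "Inl v \<in> nbhd ?GH X" using incl adjI that(2) by (auto simp: nbhd_def)
    then show "v \<in> S'" using that by (auto simp: S'_def)
  qed
  have nA: "nbhd G A' \<subseteq> S'" by (rule nb[OF _ A'_def]) (use sep in \<open>simp add: is_separation_def\<close>)
  have nB: "nbhd G B' \<subseteq> S'" by (rule nb[OF _ B'_def]) (use sep in \<open>simp add: is_separation_def\<close>)
  have fS: "finite S" using cov fGH by (metis Un_upper2 Un_upper1 finite_subset)
  have cS: "card S' \<le> card S"
  proof -
    have "Inl ` S' \<subseteq> S" by (auto simp: S'_def)
    then have "card (Inl ` S' :: ('v + 'w) set) \<le> card S" by (rule card_mono[OF fS])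
    then show ?thesis by (simp add: card_image)
  qed
  have big: "card X' \<ge> 8 ^ q" if "X \<subseteq> verts ?GH" "card X \<ge> 8 ^ q + r" "X' = {x. Inl x \<in> X}"
    for X X'
  proof -
    have "X' \<subseteq> verts G"
    proof
      fix x assume "x \<in> X'"
      then have "Inl x \<in> verts ?GH" using that by auto
      then show "x \<in> verts G" by (rule Inl_verts_glue[OF assms(1)])
    qed
    then have fX': "finite X'" using fG by (rule finite_subset)
    have "X \<subseteq> Inl ` X' \<union> Inr ` verts H"
    proof
      fix y assume y: "y \<in> X"
      then have "y \<in> Inl ` verts G \<union> Inr ` verts H"
        using that(1) verts_glue[OF assms(1), of H J] by blast
      then show "y \<in> Inl ` X' \<union> Inr ` verts H" using y that(3) by blast
    qed
    then have "card X \<le> card (Inl ` X' \<union> Inr ` verts H)"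
      using fX' fH by (intro card_mono) simp_all
    also have "\<dots> \<le> card (Inl ` X' :: ('v + 'w) set) + card (Inr ` verts H :: ('v + 'w) set)" by (rule card_Un_le)
    also have "\<dots> = card X' + card (verts H)" by (simp add: card_image)
    finally show ?thesis using that assms(4) by linarith
  qed
  have cA: "card A' \<ge> 8 ^ q" using big sep cov A'_def by (auto simp: is_separation_def)
  have cB: "card B' \<ge> 8 ^ q" using big sep cov B'_def by (auto simp: is_separation_def)
  have "is_separation G (8 ^ q) (k + 1) A' S' B'"
    unfolding is_separation_def
    using sep part Svars nA nB cS cA cB
    by (auto simp: is_separation_def A'_def S'_def B'_def)
  then show False using assms(3) by (auto simp: has_separation_def)
qed

end
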